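(* Let $\mu>0$, $x\ge0$, $y>0$, and for $n\ge 0$ set $$l_{\mu}^{(n)}(x,y)=\frac{\sum_{k=0}^n F_{\mu+k+1}(x,y)}{\sum_{k=0}^{n+1}F_{\mu+k}(x,y)},\qquad u_{\mu}^{(n)}(x,y)=\frac{\sum_{k=0}^n F_{\mu+k+1}(x,y)}{\sum_{k=0}^{n}F_{\mu+k}(x,y)}.$$ Then for every $n\ge 0$, $$l_{\mu}^{(n)}(x,y)<\frac{P_{\mu+1}(x,y)}{P_{\mu}(x,y)}<u_{\mu}^{(n)}(x,y),$$ and both $l_\mu^{(n)}(x,y)$ and $u_\mu^{(n)}(x,y)$ converge to $P_{\mu+1}(x,y)/P_{\mu}(x,y)$ as $n\to+\infty$. Moreover, the bounds are sharp as $x\to+\infty$, as $y\to 0^+$ and as $\mu\to+\infty$, i.e. the ratio of each bound to $P_{\mu+1}(x,y)/P_\mu(x,y)$ tends to $1$ in each of these limits.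
   Context: For $\mu>0$, $x>0$, $y\ge0$, the generalized Marcum $P$-function is $P_{\mu}(x,y)=x^{\frac12(1-\mu)}\int_0^{y} t^{\frac12(\mu-1)}e^{-t-x}I_{\mu-1}(2\sqrt{xt})\,dt$ ($I_\nu$ the modified Bessel function of the first kind); at $x=0$ it is defined by continuity, $P_\mu(0,y)=\gamma(\mu,y)/\Gamma(\mu)$. Also $F_{\mu}(x,y)=(y/x)^{\mu/2}e^{-x-y}I_{\mu}(2\sqrt{xy})$ for $x>0$, and $F_\mu(0,y)=y^\mu e^{-y}/\Gamma(\mu+1)$. *)

theory Defs
  imports "HOL-Analysis.Analysis"
begin

definition besselI :: "real \<Rightarrow> real \<Rightarrow> real" where
  "besselI \<nu> z = (\<Sum>k. (z / 2) powr (2 * real k + \<nu>) / (fact k * Gamma (real k + \<nu> + 1)))"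

definition lower_gamma :: "real \<Rightarrow> real \<Rightarrow> real" where
  "lower_gamma a y = (LBINT t=0..y. t powr (a - 1) * exp (- t))"

text \<open>Generalized Marcum P-function (with the continuity value at x = 0).\<close>
definition marcumP :: "real \<Rightarrow> real \<Rightarrow> real \<Rightarrow> real" where
  "marcumP \<mu> x y =
     (if x = 0 then lower_gamma \<mu> y / Gamma \<mu>
      else x powr ((1 - \<mu>) / 2) *
        (LBINT t=0..y. t powr ((\<mu> - 1) / 2) * exp (- t - x) * besselI (\<mu> - 1) (2 * sqrt (x * t))))"

definition marcumF :: "real \<Rightarrow> real \<Rightarrow> real \<Rightarrow> real" where
  "marcumF \<mu> x y =
     (if x = 0 then y powr \<mu> * exp (- y) / Gamma (\<mu> + 1)
      else (y / x) powr (\<mu> / 2) * exp (- x - y) * besselI \<mu> (2 * sqrt (x * y)))"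

definition lbound :: "real \<Rightarrow> real \<Rightarrow> real \<Rightarrow> nat \<Rightarrow> real" where
  "lbound \<mu> x y n = (\<Sum>k\<le>n. marcumF (\<mu> + real k + 1) x y) / (\<Sum>k\<le>n+1. marcumF (\<mu> + real k) x y)"

definition ubound :: "real \<Rightarrow> real \<Rightarrow> real \<Rightarrow> nat \<Rightarrow> real" where
  "ubound \<mu> x y n = (\<Sum>k\<le>n. marcumF (\<mu> + real k + 1) x y) / (\<Sum>k\<le>n. marcumF (\<mu> + real k) x y)"

definition marcum_ratio :: "real \<Rightarrow> real \<Rightarrow> real \<Rightarrow> real" where
  "marcum_ratio \<mu> x y = marcumP (\<mu> + 1) x y / marcumP \<mu> x y"

end

theory Submission
  imports Defs "HOL-Real_Asymp.Real_Asymp"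
begin

definition bc :: "real \<Rightarrow> nat \<Rightarrow> real" where
  "bc s n = 1 / (fact n * Gamma (real n + s + 1))"

definition H :: "real \<Rightarrow> real \<Rightarrow> real" where
  "H s w = (\<Sum>n. bc s n * w ^ n)"

lemma Gamma_step: "z > 0 \<Longrightarrow> Gamma (z + 1) = z * Gamma (z::real)"
  by (rule Gamma_plus1) (auto simp: nonpos_Ints_def)

lemma bc_pos: "s > -1 \<Longrightarrow> bc s n > 0"
  unfolding bc_def by (intro divide_pos_pos mult_pos_pos) auto

lemma alg1: "(1::real) / ((a * F) * (b * G)) = (1 / (F * G)) / (a * b)"
  by simp

lemma alg2: "(a::real) \<noteq> 0 \<Longrightarrow> a * (1 / ((a * F) * G)) = 1 / (F * G)"
  by simp

lemma bc_Suc: assumes "s > -1"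
  shows "bc s (Suc n) = bc s n / ((real n + 1) * (real n + s + 1))"
proof -
  define G where "G = Gamma (real n + s + 1)"
  have eq: "Gamma (real (Suc n) + s + 1) = (real n + s + 1) * G"
    using Gamma_step[of "real n + s + 1"] assms by (simp add: algebra_simps G_def)
  have f: "fact (Suc n) = (real n + 1) * fact n" by (simp add: algebra_simps)
  have a: "bc s (Suc n) = 1 / (((real n + 1) * fact n) * ((real n + s + 1) * G))"
    unfolding bc_def eq f ..
  have b: "bc s n = 1/(fact n * G)" unfolding bc_def G_def ..
  show ?thesis unfolding a b by (rule alg1)
qed

lemma bc_summable: assumes "s > -1" shows "summable (\<lambda>n. bc s n * w ^ n)"
proof (rule summable_ratio_test[where c="1/2" and N="Suc (nat \<lceil>2 * \<bar>w\<bar>\<rceil>)"])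
  fix n assume n: "n \<ge> Suc (nat \<lceil>2 * \<bar>w\<bar>\<rceil>)"
  have pos: "bc s n > 0" using bc_pos assms by auto
  have d: "(real n + 1) * (real n + s + 1) \<ge> 2 * \<bar>w\<bar>"
  proof -
    have "real n \<ge> 2 * \<bar>w\<bar>" "real n \<ge> 1" using n by linarith+
    moreover have "real n + s + 1 \<ge> real n" using assms by simp
    ultimately have "(real n + 1) * (real n + s + 1) \<ge> 1 * real n"
      by (intro mult_mono) auto
    then show ?thesis using \<open>real n \<ge> 2 * \<bar>w\<bar>\<close> by linarith
  qed
  have dpos: "(real n + 1) * (real n + s + 1) > 0" using assms by (intro mult_pos_pos) auto
  have "norm (bc s (Suc n) * w ^ Suc n) = bc s n * \<bar>w\<bar>^n * (\<bar>w\<bar> / ((real n + 1) * (real n + s + 1)))"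
    using pos assms by (simp add: bc_Suc[OF assms] abs_mult power_abs)
  also have "\<dots> \<le> bc s n * \<bar>w\<bar>^n * (1/2)"
    using d dpos pos by (intro mult_left_mono) (auto simp: field_simps)
  also have "\<dots> = 1/2 * norm (bc s n * w ^ n)" using pos by (simp add: abs_mult power_abs)
  finally show "norm (bc s (Suc n) * w ^ Suc n) \<le> 1/2 * norm (bc s n * w ^ n)" .
qed simp

lemma diffs_bc: assumes "s > -1" shows "diffs (bc s) = bc (s + 1)"
proof
  fix n
  define G where "G = Gamma (real n + (s + 1) + 1)"
  have eq: "Gamma (real (Suc n) + s + 1) = G" by (simp add: algebra_simps G_def)
  have f: "fact (Suc n) = (real n + 1) * fact n" by (simp add: algebra_simps)
  have "diffs (bc s) n = real (Suc n) * (1 / (((real n + 1) * fact n) * G))" unfolding diffs_def bc_def eq f ..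
  also have "\<dots> = (real n + 1) * (1 / (((real n + 1) * fact n) * G))"
    by (metis of_nat_Suc add.commute)
  also have "\<dots> = 1 / (fact n * G)" by (rule alg2) simp
  finally show "diffs (bc s) n = bc (s + 1) n" unfolding bc_def G_def .
qed

lemma bc_rec: assumes "s > 0" shows "bc (s - 1) n = (real n + s) * bc s n"
proof -
  define G where "G = Gamma (real n + s)"
  have eq: "Gamma (real n + s + 1) = (real n + s) * G"
    using Gamma_step[of "real n + s"] assms by (simp add: G_def)
  have eq2: "Gamma (real n + (s - 1) + 1) = G" by (simp add: G_def)
  have "real n + s > 0" using assms by simp
  then show ?thesis unfolding bc_def eq eq2 by simp
qed

lemma H_deriv: assumes "s > -1" shows "(H s has_real_derivative H (s + 1) w) (at w)"
proof -
  have "((\<lambda>w. \<Sum>n. bc s n * w ^ n) has_field_derivative (\<Sum>n. diffs (bc s) n * w ^ n)) (at w)"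
    by (rule termdiffs_strong_converges_everywhere) (use bc_summable assms in auto)
  then show ?thesis unfolding H_def[abs_def] diffs_bc[OF assms] .
qed

lemma H_pos: assumes "s > -1" "w \<ge> 0" shows "H s w > 0"
proof -
  have "0 < bc s 0 * w ^ 0" using bc_pos assms by simp
  then have "\<exists>i. 0 < bc s i * w ^ i" by blast
  moreover have "\<And>n. 0 \<le> bc s n * w ^ n" using bc_pos[OF assms(1)] assms(2)
    by (intro mult_nonneg_nonneg) (auto intro: less_imp_le)
  ultimately show ?thesis unfolding H_def
    using suminf_pos_iff[OF bc_summable[OF assms(1)]] by blast
qed

lemma H_zero: "H s 0 = 1 / Gamma (s + 1)"
  unfolding H_def using powser_zero[of "bc s"] by (simp add: bc_def)

lemma H_rec: assumes "s > 0"
  shows "H (s - 1) w = s * H s w + w * H (s + 1) w"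
proof -
  have s1: "s > -1" "s + 1 > -1" using assms by auto
  have "(\<lambda>n. bc (s+1) n * w ^ n) sums H (s+1) w"
    unfolding H_def using bc_summable[OF s1(2)] by (simp add: summable_sums)
  then have "(\<lambda>n. w * (bc (s+1) n * w ^ n)) sums (w * H (s+1) w)" by (rule sums_mult)
  moreover have "\<And>n. w * (bc (s+1) n * w ^ n) = (\<lambda>m. real m * bc s m * w ^ m) (Suc n)"
    using diffs_bc[OF s1(1)] unfolding diffs_def by (auto simp: fun_eq_iff)
  ultimately have "(\<lambda>m. real m * bc s m * w ^ m) sums (w * H (s+1) w)"
    using sums_Suc_iff[of "\<lambda>m. real m * bc s m * w ^ m"] by simp
  moreover have "(\<lambda>m. s * (bc s m * w ^ m)) sums (s * H s w)"
    unfolding H_def using bc_summable[OF s1(1)] by (intro sums_mult summable_sums)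
  ultimately have "(\<lambda>m. s * (bc s m * w ^ m) + real m * bc s m * w ^ m) sums (s * H s w + w * H (s+1) w)"
    by (metis (no_types) sums_add)
  moreover have "\<And>m. s * (bc s m * w ^ m) + real m * bc s m * w ^ m = bc (s - 1) m * w ^ m"
    using bc_rec[OF assms] by (simp add: algebra_simps)
  ultimately have "(\<lambda>m. bc (s - 1) m * w ^ m) sums (s * H s w + w * H (s+1) w)" by simp
  then show ?thesis unfolding H_def by (simp add: sums_iff)
qed

lemma H_isCont: "s > -1 \<Longrightarrow> isCont (H s) w"
  using H_deriv DERIV_isCont by blast

lemma sqrt_powr_eq: assumes "w > 0"
  shows "sqrt w powr (2 * real k + \<nu>) = w powr (\<nu>/2) * w ^ k"
proof -
  have "sqrt w powr (2 * real k + \<nu>) = (w powr (1/2)) powr (2 * real k + \<nu>)"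
    using assms by (simp add: powr_half_sqrt)
  also have "\<dots> = w powr (real k + \<nu>/2)" by (simp add: powr_powr field_simps)
  also have "\<dots> = w powr (\<nu>/2) * w ^ k" using assms by (simp add: powr_add powr_realpow)
  finally show ?thesis .
qed

lemma besselI_eq: assumes "w > 0" "\<nu> > -1"
  shows "besselI \<nu> (2 * sqrt w) = w powr (\<nu>/2) * H \<nu> w"
proof -
  have "besselI \<nu> (2 * sqrt w) = (\<Sum>k. w powr (\<nu>/2) * (bc \<nu> k * w ^ k))"
    unfolding besselI_def bc_def using assms(1) by (simp add: sqrt_powr_eq)
  also have "\<dots> = w powr (\<nu>/2) * H \<nu> w"
    unfolding H_def by (rule suminf_mult[OF bc_summable[OF assms(2)]])
  finally show ?thesis .
qed

definition Mf :: "real \<Rightarrow> real \<Rightarrow> real \<Rightarrow> real" where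
  "Mf x a t = t powr a * H a (x * t)"

definition Kf :: "real \<Rightarrow> real \<Rightarrow> real \<Rightarrow> real" where
  "Kf x a t = t powr (a - 1) * H (a - 1) (x * t)"

lemma Kf_Suc: "Kf x (a + 1) t = Mf x a t"
  unfolding Kf_def Mf_def by simp

lemma marcumF_eq: assumes "x \<ge> 0" "y > 0" "a > 0"
  shows "marcumF a x y = exp (-x-y) * Mf x a y"
proof (cases "x = 0")
  case True then show ?thesis unfolding marcumF_def Mf_def by (simp add: H_zero)
next
  case False
  then have x: "x > 0" using assms by simp
  have xy: "x * y > 0" using x assms by simp
  have "marcumF a x y = (y / x) powr (a / 2) * exp (- x - y) * ((x*y) powr (a/2) * H a (x*y))"
    unfolding marcumF_def using False besselI_eq[OF xy, of a] assms by simp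
  also have "(y / x) powr (a / 2) * (x*y) powr (a/2) = y powr a"
  proof -
    have "(y / x) powr (a / 2) * (x*y) powr (a/2) = (y/x * (x*y)) powr (a/2)"
      by (rule powr_mult[of "y/x" "x*y", symmetric])
    also have "y/x * (x*y) = y * y" using x by simp
    also have "(y * y) powr (a/2) = y powr (a/2) * y powr (a/2)" using assms by (simp add: powr_mult)
    also have "\<dots> = y powr a" by (simp add: powr_add[symmetric])
    finally show ?thesis .
  qed
  then have "(y / x) powr (a / 2) * exp (- x - y) * ((x*y) powr (a/2) * H a (x*y))
      = exp (-x-y) * (y powr a * H a (x*y))" by (metis (no_types, lifting) mult.assoc mult.commute)
  finally show ?thesis unfolding Mf_def .
qed

lemma marcumP_eq: assumes "x \<ge> 0" "y > 0" "a > 0"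
  shows "marcumP a x y = (LBINT t=0..y. exp (-t-x) * Kf x a t)"
proof (cases "x = 0")
  case True
  have "marcumP a x y = (LBINT t=0..y. t powr (a - 1) * exp (- t) / Gamma a)"
    unfolding marcumP_def lower_gamma_def using True by simp
  also have "\<dots> = (LBINT t=0..y. exp (-t-x) * Kf x a t)"
    unfolding Kf_def using True by (simp add: H_zero mult.commute)
  finally show ?thesis .
next
  case False
  then have x: "x > 0" using assms by simp
  have "marcumP a x y = (LBINT t=0..y. x powr ((1 - a) / 2) * (t powr ((a - 1) / 2) * exp (- t - x) *
        besselI (a - 1) (2 * sqrt (x * t))))"
    unfolding marcumP_def using False by simp
  also have "\<dots> = (LBINT t=0..y. exp (-t-x) * Kf x a t)"
  proof (rule interval_integral_cong)
    fix t assume "t \<in> einterval (min 0 (ereal y)) (max 0 (ereal y))"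
    then have t: "t > 0" using assms by (auto simp: einterval_def min_def max_def)
    have xt: "x * t > 0" using x t by simp
    have "x powr ((1 - a) / 2) * (t powr ((a - 1) / 2) * ((x*t) powr ((a-1)/2)))
        = t powr (a - 1)"
    proof -
      have "x powr ((1 - a) / 2) * (t powr ((a - 1) / 2) * ((x*t) powr ((a-1)/2)))
          = (x powr ((1 - a) / 2) * x powr ((a-1)/2)) * (t powr ((a - 1) / 2) * t powr ((a-1)/2))"
        using x t by (simp add: powr_mult)
      also have "x powr ((1 - a) / 2) * x powr ((a-1)/2) = 1"
        using x by (simp add: powr_add[symmetric] field_simps)
      also have "t powr ((a - 1) / 2) * t powr ((a-1)/2) = t powr (a - 1)"
        by (simp add: powr_add[symmetric])
      finally show ?thesis by simp
    qed
    then show "x powr ((1 - a) / 2) * (t powr ((a - 1) / 2) * exp (- t - x) *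
        besselI (a - 1) (2 * sqrt (x * t))) = exp (-t-x) * Kf x a t"
      unfolding Kf_def using besselI_eq[OF xt, of "a - 1"] assms
      by (simp add: mult.commute mult.left_commute)
  qed
  finally show ?thesis .
qed

lemma H_comp_isCont: assumes "s > -1" shows "isCont (\<lambda>t. H s (x * t)) t"
proof -
  have d0: "((\<lambda>t. x * t) has_real_derivative x) (at t)"
    using DERIV_cmult_Id by blast
  have "((\<lambda>t. H s (x*t)) has_real_derivative H (s+1) (x*t) * x) (at t)"
    by (rule DERIV_chain2[OF H_deriv d0]) (use assms in simp)
  then show ?thesis using DERIV_isCont by blast
qed

lemma Mf_deriv: assumes "t > 0" "a > 0"
  shows "(Mf x a has_real_derivative Kf x a t) (at t)"
proof -
  have d1: "((\<lambda>t. t powr a) has_real_derivative a * t powr (a-1)) (at t)"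
    by (rule has_real_derivative_powr[OF assms(1)])
  have d0: "((\<lambda>t. x * t) has_real_derivative x) (at t)"
    using DERIV_cmult_Id by blast
  have d2: "((\<lambda>t. H a (x*t)) has_real_derivative H (a+1) (x*t) * x) (at t)"
    by (rule DERIV_chain2[OF H_deriv d0]) (use assms in simp)
  have "((\<lambda>t. t powr a * H a (x*t)) has_real_derivative
      a * t powr (a-1) * H a (x*t) + H (a+1) (x*t) * x * t powr a) (at t)"
    by (rule DERIV_mult[OF d1 d2])
  moreover have "a * t powr (a-1) * H a (x*t) + H (a+1) (x*t) * x * t powr a = Kf x a t"
  proof -
    have "t powr a = t powr ((a - 1) + 1)" by simp
    also have "\<dots> = t powr (a - 1) * t powr 1" by (rule powr_add)
    also have "\<dots> = t powr (a - 1) * t" using assms(1) by simp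
    finally have "t powr a = t powr (a - 1) * t" .
    then have "a * t powr (a-1) * H a (x*t) + H (a+1) (x*t) * x * t powr a
        = t powr (a-1) * (a * H a (x*t) + (x*t) * H (a+1) (x*t))" by (simp add: algebra_simps)
    also have "a * H a (x*t) + (x*t) * H (a+1) (x*t) = H (a - 1) (x*t)"
      using H_rec[OF assms(2)] by simp
    finally show ?thesis unfolding Kf_def .
  qed
  ultimately show ?thesis unfolding Mf_def[abs_def] by simp
qed

lemma Mf_isCont: "t > 0 \<Longrightarrow> a > 0 \<Longrightarrow> isCont (Mf x a) t"
  using Mf_deriv DERIV_isCont by blast

lemma Kf_isCont: assumes "t > 0" "a > 0" shows "isCont (Kf x a) t"
proof -
  have c1: "isCont (\<lambda>t. t powr (a - 1)) t"
    using has_real_derivative_powr[OF assms(1)] DERIV_isCont by blast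
  have c2: "isCont (\<lambda>t. H (a - 1) (x * t)) t"
    by (rule H_comp_isCont) (use assms in simp)
  show ?thesis unfolding Kf_def[abs_def] using c1 c2 by (rule isCont_mult)
qed

lemma Kf_nonneg: assumes "x \<ge> 0" "t \<ge> 0" "a > 0" shows "Kf x a t \<ge> 0"
  unfolding Kf_def using H_pos[of "a-1" "x*t"] assms by (intro mult_nonneg_nonneg) auto

lemma Mf_nonneg: assumes "x \<ge> 0" "t \<ge> 0" "a > 0" shows "Mf x a t \<ge> 0"
  unfolding Mf_def using H_pos[of "a" "x*t"] assms by (intro mult_nonneg_nonneg) auto

lemma Mf_pos: assumes "x \<ge> 0" "t > 0" "a > 0" shows "Mf x a t > 0"
  unfolding Mf_def using H_pos[of "a" "x*t"] assms by (intro mult_pos_pos) auto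

lemma Mf_at0: assumes "a > 0" shows "(Mf x a \<longlongrightarrow> 0) (at_right 0)"
proof -
  have "((\<lambda>t. t powr a) \<longlongrightarrow> 0) (at_right 0)"
    by (rule tendsto_zero_powrI) (auto simp: assms eventually_at_right_less intro!: tendsto_ident_at
        eventually_mono[OF eventually_at_right_less])
  moreover have "((\<lambda>t. H a (x * t)) \<longlongrightarrow> H a (x * 0)) (at_right 0)"
  proof -
    have "isCont (\<lambda>t. H a (x * t)) 0"
      by (rule H_comp_isCont) (use assms in simp)
    then show ?thesis using isContD tendsto_within_subset by blast
  qed
  ultimately have "((\<lambda>t. t powr a * H a (x * t)) \<longlongrightarrow> 0 * H a (x * 0)) (at_right 0)"
    by (rule tendsto_mult)
  then show ?thesis unfolding Mf_def[abs_def] by simp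
qed

lemma Mf_aty: assumes "a > 0" "y > 0" shows "(Mf x a \<longlongrightarrow> Mf x a y) (at_left y)"
  using Mf_isCont[OF assms(2,1)] isContD tendsto_within_subset by blast

lemma lim_conv0: "(F \<longlongrightarrow> A) (at_right 0) \<Longrightarrow> ((F \<circ> real_of_ereal) \<longlongrightarrow> A) (at_right (0::ereal))"
  using ereal_tendsto_simps1(2)[of F A 0] by (simp add: zero_ereal_def)

lemma lim_convy: "(F \<longlongrightarrow> A) (at_left y) \<Longrightarrow> ((F \<circ> real_of_ereal) \<longlongrightarrow> A) (at_left (ereal y))"
  using ereal_tendsto_simps1(1)[of F A y] by simp

lemma int_Kf: assumes "x \<ge> 0" "y > 0" "a > 0"
  shows "set_integrable lborel (einterval 0 (ereal y)) (\<lambda>t. exp (-x) * Kf x a t)"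
    "(LBINT t=0..y. exp (-x) * Kf x a t) = exp (-x) * Mf x a y"
proof -
  have y: "0 < ereal y" using assms by simp
  have F: "\<And>t. 0 < ereal t \<Longrightarrow> ereal t < ereal y \<Longrightarrow>
     ((\<lambda>t. exp (-x) * Mf x a t) has_real_derivative exp (-x) * Kf x a t) (at t)"
    using Mf_deriv assms by (auto intro!: DERIV_cmult)
  have f: "\<And>t. 0 < ereal t \<Longrightarrow> ereal t < ereal y \<Longrightarrow> isCont (\<lambda>t. exp (-x) * Kf x a t) t"
    using Kf_isCont assms by auto
  have nn: "AE t in lborel. 0 < ereal t \<longrightarrow> ereal t < ereal y \<longrightarrow> 0 \<le> exp (-x) * Kf x a t"
    using Kf_nonneg assms by auto
  have A: "(((\<lambda>t. exp (-x) * Mf x a t) \<circ> real_of_ereal) \<longlongrightarrow> exp (-x) * 0) (at_right 0)"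
    by (intro lim_conv0 tendsto_mult tendsto_const Mf_at0 assms)
  have B: "(((\<lambda>t. exp (-x) * Mf x a t) \<circ> real_of_ereal) \<longlongrightarrow> exp (-x) * Mf x a y) (at_left (ereal y))"
    by (intro lim_convy tendsto_mult tendsto_const Mf_aty assms)
  note R = interval_integral_FTC_nonneg[OF y F f nn A B]
  show "set_integrable lborel (einterval 0 (ereal y)) (\<lambda>t. exp (-x) * Kf x a t)" using R(1) .
  show "(LBINT t=0..y. exp (-x) * Kf x a t) = exp (-x) * Mf x a y" using R(2) by simp
qed

lemma LBINT_set: "y > 0 \<Longrightarrow> (LBINT t=0..y. f t) = (LINT t:einterval 0 (ereal y)|lborel. f t)"
  by (simp add: interval_lebesgue_integral_def)

lemma f1_isCont: assumes "t > 0" "a > 0" shows "isCont (\<lambda>t. exp (-t-x) * Kf x a t) t"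
  using Kf_isCont[OF assms] by (intro isCont_mult) (auto intro!: continuous_intros)

lemma P_integrable: assumes "x \<ge> 0" "y > 0" "a > 0"
  shows "set_integrable lborel (einterval 0 (ereal y)) (\<lambda>t. exp (-t-x) * Kf x a t)"
proof (rule set_integrable_bound[OF int_Kf(1)[OF assms]])
  show "set_borel_measurable lborel (einterval 0 (ereal y)) (\<lambda>t. exp (- t - x) * Kf x a t)"
    unfolding set_borel_measurable_def
    using f1_isCont assms
    by (auto simp del: real_scaleR_def intro!: borel_measurable_continuous_on_indicator
             simp: continuous_on_eq_continuous_at einterval_iff)
  show "AE t in lborel. t \<in> einterval 0 (ereal y) \<longrightarrow>
      norm (exp (- t - x) * Kf x a t) \<le> norm (exp (- x) * Kf x a t)"
  proof (rule AE_I2, rule impI)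
    fix t assume "t \<in> einterval 0 (ereal y)"
    then have t: "t > 0" by (simp add: einterval_iff)
    have k: "Kf x a t \<ge> 0" using Kf_nonneg assms t by simp
    have "exp (-t-x) \<le> exp (-x)" using t by simp
    then show "norm (exp (- t - x) * Kf x a t) \<le> norm (exp (- x) * Kf x a t)"
      using k by (simp add: abs_mult mult_right_mono)
  qed
qed

lemma P_diff: assumes "x \<ge> 0" "y > 0" "a > 0"
  shows "marcumP a x y - marcumP (a + 1) x y = marcumF a x y"
proof -
  have a1: "a + 1 > 0" using assms by simp
  have I1: "set_integrable lborel (einterval 0 (ereal y)) (\<lambda>t. exp (-t-x) * Kf x a t)"
    by (rule P_integrable[OF assms])
  have I2: "set_integrable lborel (einterval 0 (ereal y)) (\<lambda>t. exp (-t-x) * Kf x (a+1) t)"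
    by (rule P_integrable[OF assms(1,2) a1])
  have "marcumP a x y - marcumP (a + 1) x y =
      (LINT t:einterval 0 (ereal y)|lborel. exp (-t-x) * Kf x a t - exp (-t-x) * Kf x (a+1) t)"
    unfolding marcumP_eq[OF assms] marcumP_eq[OF assms(1,2) a1] LBINT_set[OF assms(2)]
    using set_integral_diff(2)[OF I1 I2] by simp
  also have "\<dots> = (LBINT t=0..y. exp (-t-x) * Kf x a t - exp (-t-x) * Kf x (a+1) t)"
    by (rule LBINT_set[OF assms(2), symmetric])
  also have "\<dots> = exp (-y-x) * Mf x a y - 0"
  proof (rule interval_integral_FTC_integrable)
    show "0 < ereal y" using assms by simp
    fix t assume t: "0 < ereal t" "ereal t < ereal y"
    then have t0: "t > 0" by simp
    have e: "((\<lambda>t. exp (-t-x)) has_real_derivative -exp(-t-x)) (at t)"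
      by (auto intro!: derivative_eq_intros)
    have "((\<lambda>t. exp (-t-x) * Mf x a t) has_real_derivative
        -exp(-t-x) * Mf x a t + Kf x a t * exp (-t-x)) (at t)"
      by (rule DERIV_mult[OF e Mf_deriv[OF t0 assms(3)]])
    then show "((\<lambda>t. exp (-t-x) * Mf x a t) has_vector_derivative
        (exp (-t-x) * Kf x a t - exp (-t-x) * Kf x (a+1) t)) (at t)"
      unfolding has_real_derivative_iff_has_vector_derivative[symmetric] Kf_Suc
      by (rule DERIV_cong) (simp add: algebra_simps)
    show "isCont (\<lambda>t. exp (-t-x) * Kf x a t - exp (-t-x) * Kf x (a+1) t) t"
      using f1_isCont[OF t0 assms(3)] f1_isCont[OF t0 a1] by (rule isCont_diff)
  next
    show "set_integrable lborel (einterval 0 (ereal y))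
        (\<lambda>t. exp (-t-x) * Kf x a t - exp (-t-x) * Kf x (a+1) t)"
      using set_integral_diff(1)[OF I1 I2] .
    have "((\<lambda>t. exp (-t-x) * Mf x a t) \<longlongrightarrow> exp (-0-x) * 0) (at_right 0)"
      by (intro tendsto_mult Mf_at0 assms tendsto_intros)
    then show "(((\<lambda>t. exp (-t-x) * Mf x a t) \<circ> real_of_ereal) \<longlongrightarrow> 0) (at_right 0)"
      using lim_conv0 by simp
    have "((\<lambda>t. exp (-t-x) * Mf x a t) \<longlongrightarrow> exp (-y-x) * Mf x a y) (at_left y)"
      by (intro tendsto_mult Mf_aty assms tendsto_intros)
    then show "(((\<lambda>t. exp (-t-x) * Mf x a t) \<circ> real_of_ereal) \<longlongrightarrow> exp (-y-x) * Mf x a y) (at_left (ereal y))"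
      by (rule lim_convy)
  qed
  also have "\<dots> = marcumF a x y" using marcumF_eq[OF assms] by (simp add: algebra_simps)
  finally show ?thesis .
qed

lemma P_nonneg: assumes "x \<ge> 0" "y > 0" "a > 0" shows "marcumP a x y \<ge> 0"
proof -
  have "marcumP a x y = (LINT t:einterval 0 (ereal y)|lborel. exp (-t-x) * Kf x a t)"
    unfolding marcumP_eq[OF assms] LBINT_set[OF assms(2)] ..
  also have "\<dots> \<ge> 0"
    unfolding set_lebesgue_integral_def
    by (rule integral_nonneg_AE, rule AE_I2)
       (auto simp: indicator_def einterval_iff intro!: mult_nonneg_nonneg Kf_nonneg assms)
  finally show ?thesis .
qed

lemma P_le: assumes "x \<ge> 0" "y > 0" "a > 0" shows "marcumP a x y \<le> exp y * marcumF a x y"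
proof -
  have "marcumP a x y = (LINT t:einterval 0 (ereal y)|lborel. exp (-t-x) * Kf x a t)"
    unfolding marcumP_eq[OF assms] LBINT_set[OF assms(2)] ..
  also have "\<dots> \<le> (LINT t:einterval 0 (ereal y)|lborel. exp (-x) * Kf x a t)"
  proof (rule set_integral_mono[OF P_integrable[OF assms] int_Kf(1)[OF assms]])
    fix t assume "t \<in> einterval 0 (ereal y)"
    then have t: "t > 0" by (simp add: einterval_iff)
    have k: "Kf x a t \<ge> 0" using Kf_nonneg assms t by simp
    have "exp (-t-x) \<le> exp (-x)" using t by simp
    then show "exp (-t-x) * Kf x a t \<le> exp (-x) * Kf x a t" using k by (rule mult_right_mono)
  qed
  also have "\<dots> = exp (-x) * Mf x a y"
    using int_Kf(2)[OF assms] unfolding LBINT_set[OF assms(2)] .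
  also have "\<dots> = exp y * marcumF a x y"
    using marcumF_eq[OF assms] by (simp add: exp_diff exp_minus field_simps)
  finally show ?thesis .
qed

locale mp =
  fixes \<mu> x y :: real
  assumes mu: "\<mu> > 0" and xnn: "x \<ge> 0" and ypos: "y > 0"
begin

definition f :: "nat \<Rightarrow> real" where "f k = marcumF (\<mu> + real k) x y"
definition \<rho> :: "nat \<Rightarrow> real" where "\<rho> k = f (Suc k) / f k"

lemma f_eq: "f k = exp (-x-y) * (y powr (\<mu> + real k) * H (\<mu> + real k) (x * y))"
  unfolding f_def using marcumF_eq[OF xnn ypos, of "\<mu> + real k"] mu by (simp add: Mf_def)

lemma f_pos: "f k > 0"
  unfolding f_def using marcumF_eq[OF xnn ypos, of "\<mu> + real k"] mu Mf_pos[OF xnn ypos, of "\<mu> + real k"]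
  by simp

lemma f_rec: "y * f k = (\<mu> + real k + 1) * f (Suc k) + x * f (Suc (Suc k))"
proof -
  define s where "s = \<mu> + real k + 1"
  define E where "E = exp (-x-y)"
  have s: "s > 0" using mu by (simp add: s_def)
  have e0: "\<mu> + real k = s - 1" "\<mu> + real (Suc k) = s" "\<mu> + real (Suc (Suc k)) = s + 1"
    by (simp_all add: s_def)
  have f0: "f k = E * (y powr (s-1) * H (s-1) (x*y))" unfolding E_def using f_eq[of k] by (simp only: e0)
  have f1: "f (Suc k) = E * (y powr s * H s (x*y))" unfolding E_def using f_eq[of "Suc k"] by (simp only: e0)
  have f2: "f (Suc (Suc k)) = E * (y powr (s+1) * H (s+1) (x*y))"
    unfolding E_def using f_eq[of "Suc (Suc k)"] by (simp only: e0)
  have p1: "y * y powr (s-1) = y powr s"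
    using ypos powr_add[of y "s-1" 1] by simp
  have p2: "y powr (s+1) = y powr s * y"
    using ypos powr_add[of y s 1] by simp
  have "y * f k = E * ((y * y powr (s-1)) * H (s-1) (x*y))" unfolding f0 by (simp add: algebra_simps)
  also have "\<dots> = E * (y powr s * H (s-1) (x*y))" unfolding p1 ..
  also have "\<dots> = E * (y powr s * (s * H s (x*y) + (x*y) * H (s+1) (x*y)))" using H_rec[OF s] by simp
  also have "\<dots> = s * f (Suc k) + x * f (Suc (Suc k))" unfolding f1 f2 p2 by (simp add: algebra_simps)
  finally show ?thesis by (simp add: s_def)
qed

lemma rho_pos: "\<rho> k > 0" unfolding \<rho>_def using f_pos by simp

lemma rho_nn: "\<rho> k \<ge> 0" using rho_pos[of k] by simp

lemma xrho_nn: "x * \<rho> k \<ge> 0" by (intro mult_nonneg_nonneg xnn rho_nn)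

lemma xrr_nn: "x * \<rho> k * \<rho> j \<ge> 0" by (intro mult_nonneg_nonneg xnn rho_nn)

lemma rho_rec: "\<rho> k * (\<mu> + real k + 1 + x * \<rho> (Suc k)) = y"
proof -
  have a: "f k > 0" "f (Suc k) > 0" using f_pos by auto
  have "\<rho> k * (\<mu> + real k + 1 + x * \<rho> (Suc k)) = ((\<mu> + real k + 1) * f (Suc k) + x * f (Suc (Suc k))) / f k"
    unfolding \<rho>_def using a by (simp add: field_simps)
  also have "\<dots> = y" using f_rec[of k] a by (simp add: field_simps)
  finally show ?thesis .
qed

lemma rho_le: "\<rho> k * (\<mu> + real k + 1) \<le> y"
proof -
  have "x * \<rho> (Suc k) \<ge> 0" by (rule xrho_nn)
  then have "\<rho> k * (\<mu> + real k + 1) \<le> \<rho> k * (\<mu> + real k + 1 + x * \<rho> (Suc k))"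
    using rho_pos[of k] by (intro mult_left_mono) auto
  then show ?thesis using rho_rec by simp
qed

lemma xrho_small: assumes "\<mu> + real k + 1 > 2 * x * y" shows "x * \<rho> k < 1/2"
proof -
  have "x * (\<rho> k * (\<mu> + real k + 1)) \<le> x * y" using rho_le xnn by (intro mult_left_mono) auto
  then have "(x * \<rho> k) * (\<mu> + real k + 1) \<le> x * y" by (simp add: mult.assoc)
  show ?thesis
  proof (rule ccontr)
    assume "\<not> x * \<rho> k < 1/2"
    then have "x * \<rho> k \<ge> 1/2" by simp
    then have "(x * \<rho> k) * (\<mu> + real k + 1) \<ge> (1/2) * (\<mu> + real k + 1)"
      using mu by (intro mult_right_mono) auto
    with \<open>(x * \<rho> k) * (\<mu> + real k + 1) \<le> x * y\<close> assms show False by simp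
  qed
qed

definition e :: "nat \<Rightarrow> real" where "e k = x * (\<rho> k - \<rho> (Suc k))"

lemma d_ident: "y * (\<rho> k - \<rho> (Suc k)) = \<rho> k * \<rho> (Suc k) * (1 - e (Suc k))"
proof -
  have r1: "\<rho> k * (\<mu> + real k + 1 + x * \<rho> (Suc k)) = y" by (rule rho_rec)
  have r2: "\<rho> (Suc k) * (\<mu> + real k + 2 + x * \<rho> (Suc (Suc k))) = y"
    using rho_rec[of "Suc k"] by (simp add: algebra_simps)
  have "y * (\<rho> k - \<rho> (Suc k)) = \<rho> k * y - \<rho> (Suc k) * y" by (simp add: algebra_simps)
  also have "\<dots> = \<rho> k * (\<rho> (Suc k) * (\<mu> + real k + 2 + x * \<rho> (Suc (Suc k))))
      - \<rho> (Suc k) * (\<rho> k * (\<mu> + real k + 1 + x * \<rho> (Suc k)))" using r1 r2 by simp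
  also have "\<dots> = \<rho> k * \<rho> (Suc k) * (1 - e (Suc k))" unfolding e_def by (simp add: algebra_simps)
  finally show ?thesis .
qed

lemma e_ident: "y * e k = x * \<rho> k * \<rho> (Suc k) * (1 - e (Suc k))"
proof -
  have "y * e k = x * (y * (\<rho> k - \<rho> (Suc k)))" unfolding e_def by (simp add: algebra_simps)
  also have "\<dots> = x * \<rho> k * \<rho> (Suc k) * (1 - e (Suc k))" unfolding d_ident by (simp add: algebra_simps)
  finally show ?thesis .
qed

lemma b_lt: "x * \<rho> k * \<rho> (Suc k) < y"
proof -
  have "x * \<rho> k * \<rho> (Suc k) = y - \<rho> k * (\<mu> + real k + 1)" using rho_rec[of k] by (simp add: algebra_simps)
  moreover have "\<rho> k * (\<mu> + real k + 1) > 0" using rho_pos mu by simp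
  ultimately show ?thesis by simp
qed

lemma e_step: assumes "0 \<le> e (Suc k)" "e (Suc k) < 1" shows "0 \<le> e k \<and> e k < 1"
proof -
  have b0: "x * \<rho> k * \<rho> (Suc k) \<ge> 0" by (rule xrr_nn)
  have "y * e k \<ge> 0" unfolding e_ident using b0 assms by simp
  then have g: "e k \<ge> 0" using ypos by (simp add: zero_le_mult_iff)
  have "y * e k \<le> x * \<rho> k * \<rho> (Suc k)" unfolding e_ident using b0 assms
    by (simp add: mult_left_le)
  then have "y * e k < y * 1" using b_lt[of k] by simp
  then have "e k < 1" using ypos by simp
  with g show ?thesis by simp
qed

lemma e_base: assumes "real N \<ge> 2 * x * y" shows "0 \<le> e N \<and> e N < 1"
proof -
  have s1: "x * \<rho> (Suc N) < 1/2" "x * \<rho> (Suc (Suc N)) < 1/2"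
    by (rule xrho_small, use assms mu in simp)+
  have n1: "x * \<rho> (Suc N) \<ge> 0" "x * \<rho> (Suc (Suc N)) \<ge> 0" by (rule xrho_nn)+
  have eb: "-1/2 < e (Suc N)" "e (Suc N) < 1/2" using s1 n1 unfolding e_def by (simp_all add: algebra_simps)
  have b0: "x * \<rho> N * \<rho> (Suc N) \<ge> 0" by (rule xrr_nn)
  have "y * e N \<ge> 0" unfolding e_ident using b0 eb by simp
  then have g: "e N \<ge> 0" using ypos by (simp add: zero_le_mult_iff)
  have "\<rho> N * 1 \<le> \<rho> N * (\<mu> + real N + 1)" using rho_nn[of N] mu by (intro mult_left_mono) auto
  then have rN: "\<rho> N \<le> y" using rho_le[of N] by simp
  have "y * e N = (x * \<rho> (Suc N)) * \<rho> N * (1 - e (Suc N))" unfolding e_ident by (simp add: algebra_simps)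
  also have "\<dots> \<le> (1/2) * y * (3/2)"
  proof (rule mult_mono)
    show "x * \<rho> (Suc N) * \<rho> N \<le> 1 / 2 * y"
      by (rule mult_mono[OF _ rN]) (use s1 n1 rho_nn in auto)
    show "1 - e (Suc N) \<le> 3 / 2" using eb by simp
    show "0 \<le> 1 / 2 * y" using ypos by simp
    show "0 \<le> 1 - e (Suc N)" using eb by simp
  qed
  finally have "y * e N < y * 1" using ypos by simp
  then show ?thesis using g ypos by simp
qed

lemma e_all: "0 \<le> e k \<and> e k < 1"
proof -
  obtain N0 where N0: "2 * x * y \<le> real N0" using real_arch_simple by blast
  define N where "N = max N0 k"
  have N: "real N \<ge> 2 * x * y" "N \<ge> k" using N0 by (auto simp: N_def)
  have "\<forall>d. d \<le> N \<longrightarrow> 0 \<le> e (N - d) \<and> e (N - d) < 1"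
  proof (intro allI)
    fix d show "d \<le> N \<longrightarrow> 0 \<le> e (N - d) \<and> e (N - d) < 1"
    proof (induction d)
      case 0 then show ?case using e_base[OF N(1)] by simp
    next
      case (Suc d)
      show ?case
      proof
        assume "Suc d \<le> N"
        then have "Suc (N - Suc d) = N - d" by simp
        then show "0 \<le> e (N - Suc d) \<and> e (N - Suc d) < 1"
          using Suc \<open>Suc d \<le> N\<close> e_step[of "N - Suc d"] by simp
      qed
    qed
  qed
  then have "0 \<le> e (N - (N - k)) \<and> e (N - (N - k)) < 1" by simp
  then show ?thesis using N(2) by simp
qed

lemma rho_decr: "\<rho> (Suc k) < \<rho> k"
proof -
  have "y * (\<rho> k - \<rho> (Suc k)) > 0" unfolding d_ident
    using rho_pos e_all[of "Suc k"] by simp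
  then show ?thesis using ypos by (simp add: zero_less_mult_iff)
qed

lemma rho_mono: "k \<le> n \<Longrightarrow> \<rho> n \<le> \<rho> k"
proof -
  have "decseq \<rho>" by (rule decseq_SucI) (use rho_decr less_imp_le in blast)
  then show "k \<le> n \<Longrightarrow> \<rho> n \<le> \<rho> k" by (rule decseqD)
qed

end

context mp begin

lemma P_step: "marcumP (\<mu> + real k) x y - marcumP (\<mu> + real (Suc k)) x y = f k"
proof -
  have "\<mu> + real k > 0" using mu by simp
  from P_diff[OF xnn ypos this] show ?thesis unfolding f_def by (simp add: add_ac)
qed

lemma P_partial: "marcumP \<mu> x y = sum f {..<K} + marcumP (\<mu> + real K) x y"
proof (induction K)
  case 0 then show ?case by simp
next
  case (Suc K) then show ?case using P_step[of K] by simp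
qed

lemma Pa_nonneg: "marcumP (\<mu> + real K) x y \<ge> 0"
  using P_nonneg[OF xnn ypos, of "\<mu> + real K"] mu by simp

lemma Pa_le: "marcumP (\<mu> + real K) x y \<le> exp y * f K"
  using P_le[OF xnn ypos, of "\<mu> + real K"] mu unfolding f_def by simp

lemma f_summable: "summable f"
proof (rule summableI_nonneg_bounded[where x="marcumP \<mu> x y"])
  show "0 \<le> f n" for n using f_pos[of n] by simp
  show "sum f {..<n} \<le> marcumP \<mu> x y" for n using P_partial[of n] Pa_nonneg[of n] by linarith
qed

lemma f_sums: "f sums marcumP \<mu> x y"
proof -
  have "f \<longlonglongrightarrow> 0" by (rule summable_LIMSEQ_zero[OF f_summable])
  then have h: "(\<lambda>K. exp y * f K) \<longlonglongrightarrow> 0"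
    using tendsto_mult[OF tendsto_const[of "exp y"]] by fastforce
  have g: "(\<lambda>K. marcumP (\<mu> + real K) x y) \<longlonglongrightarrow> 0"
  proof (rule tendsto_sandwich[OF _ _ tendsto_const h])
    show "\<forall>\<^sub>F n in sequentially. 0 \<le> marcumP (\<mu> + real n) x y"
      by (rule always_eventually) (use Pa_nonneg in blast)
    show "\<forall>\<^sub>F n in sequentially. marcumP (\<mu> + real n) x y \<le> exp y * f n"
      by (rule always_eventually) (use Pa_le in blast)
  qed
  have "(\<lambda>K. marcumP \<mu> x y - marcumP (\<mu> + real K) x y) \<longlonglongrightarrow> marcumP \<mu> x y - 0"
    by (rule tendsto_diff[OF tendsto_const g])
  moreover have "\<And>K. marcumP \<mu> x y - marcumP (\<mu> + real K) x y = sum f {..<K}"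
    using P_partial by (metis add_diff_cancel_right')
  ultimately show ?thesis unfolding sums_def by simp
qed

lemma P1_eq: "marcumP (\<mu> + 1) x y = marcumP \<mu> x y - f 0"
  using P_step[of 0] by simp

lemma fS_sums: "(\<lambda>k. f (Suc k)) sums marcumP (\<mu> + 1) x y"
  using f_sums sums_Suc_iff[of f "marcumP (\<mu> + 1) x y"] P1_eq by simp

lemma T_pos: "marcumP \<mu> x y > 0"
proof -
  have "suminf f > 0" by (rule suminf_pos[OF f_summable f_pos])
  then show ?thesis using f_sums by (simp add: sums_iff)
qed

lemma S_pos: "marcumP (\<mu> + 1) x y > 0"
proof -
  have "(\<Sum>k. f (Suc k)) > 0" by (rule suminf_pos[OF sums_summable[OF fS_sums] f_pos])
  then show ?thesis using fS_sums by (simp add: sums_iff)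
qed

definition A :: "nat \<Rightarrow> real" where "A n = (\<Sum>k\<le>n. f (Suc k))"
definition B :: "nat \<Rightarrow> real" where "B n = (\<Sum>k\<le>n. f k)"

lemma lbound_eq: "lbound \<mu> x y n = A n / B (Suc n)"
  unfolding lbound_def A_def B_def f_def by (simp add: add_ac)

lemma ubound_eq: "ubound \<mu> x y n = A n / B n"
  unfolding ubound_def A_def B_def f_def by (simp add: add_ac)

lemma ratio_eq: "marcum_ratio \<mu> x y = marcumP (\<mu> + 1) x y / marcumP \<mu> x y"
  unfolding marcum_ratio_def ..

lemma B_pos: "B n > 0" unfolding B_def using f_pos by (intro sum_pos) auto
lemma A_pos: "A n > 0" unfolding A_def using f_pos by (intro sum_pos) auto

lemma BS: "B (Suc n) = f 0 + A n"
  unfolding A_def B_def by (rule sum.atMost_Suc_shift)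

lemma BS2: "B (Suc n) = B n + f (Suc n)"
  unfolding B_def by simp

definition tl :: "nat \<Rightarrow> real" where "tl m = (\<Sum>j. f (j + m))"

lemma T_split: "marcumP \<mu> x y = tl (Suc n) + B n"
proof -
  have "marcumP \<mu> x y = suminf f" using f_sums by (simp add: sums_iff)
  also have "\<dots> = tl (Suc n) + sum f {..<Suc n}"
    unfolding tl_def by (rule suminf_split_initial_segment[OF f_summable])
  finally show ?thesis unfolding B_def lessThan_Suc_atMost .
qed

lemma tl_summable: "summable (\<lambda>j. f (j + m))" using f_summable by simp

lemma tl_pos: "tl m > 0"
  unfolding tl_def using tl_summable f_pos by (intro suminf_pos) auto

lemma tl_Suc: "tl m = f m + tl (Suc m)"
proof -
  have "tl (Suc m) = (\<Sum>j. f (Suc j + m))" unfolding tl_def by simp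
  also have "\<dots> = tl m - f m"
    unfolding tl_def using suminf_split_head[OF tl_summable[of m]] by simp
  finally show ?thesis by simp
qed

lemma tl_le: "tl (Suc (Suc n)) \<le> \<rho> (Suc n) * tl (Suc n)"
proof -
  have "tl (Suc (Suc n)) = (\<Sum>j. \<rho> (j + Suc n) * f (j + Suc n))"
    unfolding tl_def
  proof (rule suminf_cong)
    fix j
    have "f (j + Suc n) > 0" using f_pos by simp
    then show "f (j + Suc (Suc n)) = \<rho> (j + Suc n) * f (j + Suc n)"
      unfolding \<rho>_def by simp
  qed
  also have "\<dots> \<le> (\<Sum>j. \<rho> (Suc n) * f (j + Suc n))"
  proof (rule suminf_le)
    fix j show "\<rho> (j + Suc n) * f (j + Suc n) \<le> \<rho> (Suc n) * f (j + Suc n)"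
      using rho_mono[of "Suc n" "j + Suc n"] f_pos[of "j + Suc n"] by (intro mult_right_mono) auto
    show "summable (\<lambda>j. \<rho> (Suc n) * f (j + Suc n))" by (intro summable_mult tl_summable)
    have "summable (\<lambda>j. f (j + Suc (Suc n)))" by (rule tl_summable)
    moreover have "\<And>j. f (j + Suc (Suc n)) = \<rho> (j + Suc n) * f (j + Suc n)"
      using f_pos unfolding \<rho>_def by (simp add: less_imp_neq[symmetric])
    ultimately show "summable (\<lambda>j. \<rho> (j + Suc n) * f (j + Suc n))" by simp
  qed
  also have "\<dots> = \<rho> (Suc n) * tl (Suc n)" unfolding tl_def
    by (rule suminf_mult[OF tl_summable])
  finally show ?thesis .
qed

lemma A_ge: "A n \<ge> \<rho> n * B n"
proof -
  have "\<rho> n * B n = (\<Sum>k\<le>n. \<rho> n * f k)" unfolding B_def by (simp add: sum_distrib_left)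
  also have "\<dots> \<le> (\<Sum>k\<le>n. \<rho> k * f k)"
    using rho_mono f_pos by (intro sum_mono mult_right_mono) (auto intro: less_imp_le)
  also have "\<dots> = A n" unfolding A_def \<rho>_def using f_pos by (intro sum.cong) (auto simp: less_imp_neq[symmetric])
  finally show ?thesis .
qed

lemma lower: "A n / B (Suc n) < marcumP (\<mu> + 1) x y / marcumP \<mu> x y"
proof -
  let ?T = "marcumP \<mu> x y" and ?S = "marcumP (\<mu> + 1) x y"
  have T: "?T = B (Suc n) + tl (Suc (Suc n))" using T_split[of "Suc n"] by simp
  have S: "?S = ?T - f 0" using P1_eq .
  have "?S * B (Suc n) - A n * ?T = tl (Suc (Suc n)) * f 0"
    unfolding S T BS by (simp add: algebra_simps)
  also have "\<dots> > 0" using tl_pos f_pos by simp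
  finally have "A n * ?T < ?S * B (Suc n)" by simp
  then show ?thesis using B_pos T_pos by (simp add: field_simps)
qed

lemma upper: "marcumP (\<mu> + 1) x y / marcumP \<mu> x y < A n / B n"
proof -
  let ?T = "marcumP \<mu> x y" and ?S = "marcumP (\<mu> + 1) x y"
  have T: "?T = B n + tl (Suc n)" using T_split[of n] by simp
  have S: "?S = A n + tl (Suc (Suc n))"
    using P1_eq T_split[of n] BS[of n] BS2[of n] tl_Suc[of "Suc n"] by linarith
  have t1: "tl (Suc n) > 0" by (rule tl_pos)
  have "tl (Suc (Suc n)) * B n \<le> \<rho> (Suc n) * tl (Suc n) * B n"
    using tl_le B_pos[of n] by (intro mult_right_mono) auto
  also have "\<dots> < \<rho> n * tl (Suc n) * B n"
    by (rule mult_strict_right_mono[OF mult_strict_right_mono[OF rho_decr t1] B_pos])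
  also have "\<dots> = (\<rho> n * B n) * tl (Suc n)" by (simp add: algebra_simps)
  also have "\<dots> \<le> A n * tl (Suc n)"
    using A_ge[of n] t1 by (intro mult_right_mono) auto
  finally have lt: "tl (Suc (Suc n)) * B n < A n * tl (Suc n)" .
  have e1: "?S * B n = A n * B n + tl (Suc (Suc n)) * B n" unfolding S by (simp add: algebra_simps)
  have e2: "A n * ?T = A n * B n + A n * tl (Suc n)" unfolding T by (simp add: algebra_simps)
  have "?S * B n < A n * ?T" unfolding e1 e2 using lt by linarith
  then show ?thesis using B_pos T_pos by (simp add: field_simps)
qed

lemma ub_lb: "A n / B n \<le> (1 + \<rho> 0) * (A n / B (Suc n))"
proof -
  have "f (Suc n) = \<rho> n * f n" unfolding \<rho>_def using f_pos[of n] by simp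
  also have "\<dots> \<le> \<rho> 0 * f n" using rho_mono[of 0 n] f_pos[of n] by (intro mult_right_mono) auto
  also have "\<dots> \<le> \<rho> 0 * B n"
  proof (rule mult_left_mono)
    show "f n \<le> B n" unfolding B_def by (rule member_le_sum) (auto intro: less_imp_le f_pos)
  qed (rule rho_nn)
  finally have "B (Suc n) \<le> (1 + \<rho> 0) * B n" using BS2 by (simp add: algebra_simps)
  then have "A n * B (Suc n) \<le> A n * ((1 + \<rho> 0) * B n)" using A_pos[of n] by (intro mult_left_mono) auto
  then show ?thesis using B_pos[of n] B_pos[of "Suc n"] by (simp add: field_simps)
qed

end

lemma sharp_gen:
  fixes l R u r :: real
  assumes "0 < l" "l < R" "R < u" "u \<le> (1 + r) * l" "r \<ge> 0"
  shows "\<bar>l / R - 1\<bar> \<le> r" "\<bar>u / R - 1\<bar> \<le> r"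
proof -
  have R: "R > 0" using assms by simp
  have ul: "u - l \<le> r * l" using assms(4) by (simp add: algebra_simps)
  have "r * l \<le> r * R" using assms by (intro mult_left_mono) auto
  then have key: "u - l \<le> r * R" using ul by simp
  have "\<bar>l / R - 1\<bar> = (R - l) / R" using R assms by (simp add: field_simps)
  also have "\<dots> \<le> r" using key assms R by (simp add: field_simps)
  finally show "\<bar>l / R - 1\<bar> \<le> r" .
  have "\<bar>u / R - 1\<bar> = (u - R) / R" using R assms by (simp add: field_simps)
  also have "\<dots> \<le> r" using key assms R by (simp add: field_simps)
  finally show "\<bar>u / R - 1\<bar> \<le> r" .
qed

lemma lim1:
  fixes g r :: "'a \<Rightarrow> real"
  assumes "eventually (\<lambda>p. \<bar>g p - 1\<bar> \<le> r p) F" "(r \<longlongrightarrow> 0) F"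
  shows "(g \<longlongrightarrow> 1) F"
proof -
  have "((\<lambda>p. g p - 1) \<longlongrightarrow> 0) F"
    by (rule Lim_null_comparison[OF _ assms(2)]) (use assms(1) in simp)
  then show ?thesis by (rule LIM_zero_cancel)
qed

context mp begin

lemma rho0_eq: "\<rho> 0 = marcumF (\<mu> + 1) x y / marcumF \<mu> x y"
  unfolding \<rho>_def f_def by simp

lemma sharp: "\<bar>lbound \<mu> x y n / marcum_ratio \<mu> x y - 1\<bar> \<le> \<rho> 0"
  "\<bar>ubound \<mu> x y n / marcum_ratio \<mu> x y - 1\<bar> \<le> \<rho> 0"
proof -
  have "A n / B (Suc n) > 0" using A_pos B_pos by simp
  note s = sharp_gen[OF this lower[of n] upper[of n] ub_lb[of n] rho_nn[of 0]]
  show "\<bar>lbound \<mu> x y n / marcum_ratio \<mu> x y - 1\<bar> \<le> \<rho> 0"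
    using s(1) unfolding lbound_eq ratio_eq .
  show "\<bar>ubound \<mu> x y n / marcum_ratio \<mu> x y - 1\<bar> \<le> \<rho> 0"
    using s(2) unfolding ubound_eq ratio_eq .
qed

lemma rho0_le_mu: "\<rho> 0 \<le> y / (\<mu> + 1)"
  using rho_le[of 0] mu by (simp add: field_simps)

lemma rho0_le_x: assumes xp: "x > 0"
  shows "\<rho> 0 \<le> sqrt (2 * y / x + 4 * (\<mu> + 2)^2 / x^2)"
proof -
  define r0 where "r0 = \<rho> 0"
  define r1 where "r1 = \<rho> 1"
  define r2 where "r2 = \<rho> 2"
  have p: "r0 > 0" "r1 > 0" "r2 > 0" unfolding r0_def r1_def r2_def using rho_pos by auto
  have h0: "r0 * (\<mu> + 1 + x * r1) = y" using rho_rec[of 0] unfolding r0_def r1_def by simp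
  have h1: "r1 * (\<mu> + 2 + x * r2) = y" using rho_rec[of 1] unfolding r1_def r2_def
    by (simp add: numeral_2_eq_2 add.assoc)
  have r21: "r2 < r1" using rho_decr[of 1] unfolding r1_def r2_def by (simp add: numeral_2_eq_2)
  have a: "r0 * (x * r1) \<le> y"
  proof -
    have "r0 * (\<mu> + 1) \<ge> 0" using p mu by simp
    then show ?thesis using h0 by (simp add: algebra_simps)
  qed
  have b: "y \<le> r1 * (\<mu> + 2) + r1 * (x * r1)"
  proof -
    have "r1 * (x * r2) \<le> r1 * (x * r1)" using p r21 xp by (intro mult_left_mono) auto
    then show ?thesis using h1 by (simp add: algebra_simps)
  qed
  have sq: "r0^2 \<le> 2 * y / x + 4 * (\<mu> + 2)^2 / x^2"
  proof (cases "x * r1 \<ge> \<mu> + 2")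
    case True
    have "r1 * (\<mu> + 2) \<le> r1 * (x * r1)" using True p by (intro mult_left_mono) auto
    then have c: "y / 2 \<le> x * r1^2" using b by (simp add: power2_eq_square algebra_simps)
    have "(r0 * (x * r1))^2 \<le> y^2" using a p xp by (intro power_mono) auto
    then have d: "r0^2 * x * (x * r1^2) \<le> y^2" by (simp add: power2_eq_square algebra_simps)
    have "r0^2 * x * (y / 2) \<le> r0^2 * x * (x * r1^2)" using c p xp by (intro mult_left_mono) auto
    with d have "r0^2 * x * (y / 2) \<le> y^2" by simp
    then have "r0^2 \<le> 2 * y / x" using xp ypos by (simp add: field_simps power2_eq_square)
    moreover have "4 * (\<mu> + 2)^2 / x^2 \<ge> 0" by simp
    ultimately show ?thesis by linarith
  next
    case False
    have "r1 * (x * r1) \<le> r1 * (\<mu> + 2)" using False p by (intro mult_left_mono) auto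
    moreover have "2 * (\<mu> + 2) * r1 = r1 * (\<mu> + 2) + r1 * (\<mu> + 2)" by (simp add: algebra_simps)
    ultimately have c: "y \<le> 2 * (\<mu> + 2) * r1" using b by linarith
    have "r0 * x * y \<le> r0 * x * (2 * (\<mu> + 2) * r1)" using c p xp by (intro mult_left_mono) auto
    also have "\<dots> = 2 * (\<mu> + 2) * (r0 * (x * r1))" by (simp add: algebra_simps)
    also have "\<dots> \<le> 2 * (\<mu> + 2) * y" using a mu by (intro mult_left_mono) auto
    finally have "(r0 * x) * y \<le> (2 * (\<mu> + 2)) * y" by simp
    then have "r0 * x \<le> 2 * (\<mu> + 2)" using ypos by simp
    then have "(r0 * x)^2 \<le> (2 * (\<mu> + 2))^2" using p xp by (intro power_mono) auto
    moreover have "(2 * (\<mu> + 2))^2 = 4 * (\<mu> + 2)^2" by (simp only: power_mult_distrib) simp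
    moreover have "(r0 * x)^2 = r0^2 * x^2" by (simp only: power_mult_distrib)
    ultimately have "r0^2 * x^2 \<le> 4 * (\<mu> + 2)^2" by simp
    then have "r0^2 \<le> 4 * (\<mu> + 2)^2 / x^2" using xp by (simp add: field_simps)
    moreover have "2 * y / x \<ge> 0" using xp ypos by simp
    ultimately show ?thesis by linarith
  qed
  show ?thesis unfolding r0_def[symmetric] by (rule real_le_rsqrt[OF sq])
qed

end

lemma mpI: "\<mu> > 0 \<Longrightarrow> x \<ge> 0 \<Longrightarrow> y > 0 \<Longrightarrow> mp \<mu> x y" by (rule mp.intro)

lemma lim_x: "((\<lambda>x'::real. sqrt (2 * y / x' + 4 * (\<mu> + 2)^2 / x'^2)) \<longlongrightarrow> 0) at_top"
proof -
  have inf: "filterlim (\<lambda>x'::real. x') at_infinity at_top"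
    by (rule filterlim_at_top_imp_at_infinity[OF filterlim_ident])
  have inf2: "filterlim (\<lambda>x'::real. x'^2) at_infinity at_top"
    by (rule filterlim_at_top_imp_at_infinity[OF filterlim_pow_at_top[OF _ filterlim_ident]]) simp
  have "((\<lambda>x'::real. 2 * y / x') \<longlongrightarrow> 0) at_top" by (rule tendsto_divide_0[OF tendsto_const inf])
  moreover have "((\<lambda>x'::real. 4 * (\<mu> + 2)^2 / x'^2) \<longlongrightarrow> 0) at_top"
    by (rule tendsto_divide_0[OF tendsto_const inf2])
  ultimately have "((\<lambda>x'::real. 2 * y / x' + 4 * (\<mu> + 2)^2 / x'^2) \<longlongrightarrow> 0 + 0) at_top"
    by (rule tendsto_add)
  then have "((\<lambda>x'::real. sqrt (2 * y / x' + 4 * (\<mu> + 2)^2 / x'^2)) \<longlongrightarrow> sqrt (0 + 0)) at_top"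
    by (rule tendsto_real_sqrt)
  then show ?thesis by simp
qed

lemma lim_mu: "((\<lambda>m::real. y / (m + 1)) \<longlongrightarrow> 0) at_top"
  by real_asymp

lemma lim_y: assumes "\<mu> > 0" shows "((\<lambda>y'::real. y' / (\<mu> + 1)) \<longlongrightarrow> 0) (at_right 0)"
proof -
  have "((\<lambda>y'::real. y' / (\<mu> + 1)) \<longlongrightarrow> 0 / (\<mu> + 1)) (at_right 0)"
    by (intro tendsto_divide tendsto_ident_at tendsto_const) (use assms in simp)
  then show ?thesis by simp
qed

theorem theorem5:
  fixes \<mu> x y :: real
  assumes "\<mu> > 0" and "x \<ge> 0" and "y > 0"
  shows "(\<forall>n. lbound \<mu> x y n < marcum_ratio \<mu> x y \<and> marcum_ratio \<mu> x y < ubound \<mu> x y n)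
    \<and> (\<lambda>n. lbound \<mu> x y n) \<longlonglongrightarrow> marcum_ratio \<mu> x y
    \<and> (\<lambda>n. ubound \<mu> x y n) \<longlonglongrightarrow> marcum_ratio \<mu> x y
    \<and> (\<forall>n. ((\<lambda>x'. lbound \<mu> x' y n / marcum_ratio \<mu> x' y) \<longlongrightarrow> 1) at_top
          \<and> ((\<lambda>x'. ubound \<mu> x' y n / marcum_ratio \<mu> x' y) \<longlongrightarrow> 1) at_top)
    \<and> (\<forall>n. ((\<lambda>y'. lbound \<mu> x y' n / marcum_ratio \<mu> x y') \<longlongrightarrow> 1) (at_right 0)
          \<and> ((\<lambda>y'. ubound \<mu> x y' n / marcum_ratio \<mu> x y') \<longlongrightarrow> 1) (at_right 0))
    \<and> (\<forall>n. ((\<lambda>m. lbound m x y n / marcum_ratio m x y) \<longlongrightarrow> 1) at_top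
          \<and> ((\<lambda>m. ubound m x y n / marcum_ratio m x y) \<longlongrightarrow> 1) at_top)"
proof -
  interpret M: mp \<mu> x y using assms by (rule mpI)
  have P1: "\<forall>n. lbound \<mu> x y n < marcum_ratio \<mu> x y \<and> marcum_ratio \<mu> x y < ubound \<mu> x y n"
    using M.lower M.upper unfolding M.lbound_eq M.ubound_eq M.ratio_eq by blast
  have TA: "M.A \<longlonglongrightarrow> marcumP (\<mu> + 1) x y"
  proof -
    have "(\<lambda>n. \<Sum>k<n. M.f (Suc k)) \<longlonglongrightarrow> marcumP (\<mu> + 1) x y"
      using M.fS_sums unfolding sums_def .
    from LIMSEQ_Suc[OF this] show ?thesis unfolding M.A_def lessThan_Suc_atMost .
  qed
  have TB: "M.B \<longlonglongrightarrow> marcumP \<mu> x y"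
  proof -
    have "(\<lambda>n. \<Sum>k<n. M.f k) \<longlonglongrightarrow> marcumP \<mu> x y"
      using M.f_sums unfolding sums_def .
    from LIMSEQ_Suc[OF this] show ?thesis unfolding M.B_def lessThan_Suc_atMost .
  qed
  have TB2: "(\<lambda>n. M.B (Suc n)) \<longlonglongrightarrow> marcumP \<mu> x y" by (rule LIMSEQ_Suc[OF TB])
  have Tne: "marcumP \<mu> x y \<noteq> 0" using M.T_pos by simp
  have P2: "(\<lambda>n. lbound \<mu> x y n) \<longlonglongrightarrow> marcum_ratio \<mu> x y"
    unfolding M.lbound_eq M.ratio_eq by (rule tendsto_divide[OF TA TB2 Tne])
  have P3: "(\<lambda>n. ubound \<mu> x y n) \<longlonglongrightarrow> marcum_ratio \<mu> x y"
    unfolding M.ubound_eq M.ratio_eq by (rule tendsto_divide[OF TA TB Tne])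
  have P4: "((\<lambda>x'. lbound \<mu> x' y n / marcum_ratio \<mu> x' y) \<longlongrightarrow> 1) at_top
          \<and> ((\<lambda>x'. ubound \<mu> x' y n / marcum_ratio \<mu> x' y) \<longlongrightarrow> 1) at_top" for n
  proof -
    have ev: "eventually (\<lambda>x'. \<bar>lbound \<mu> x' y n / marcum_ratio \<mu> x' y - 1\<bar>
          \<le> sqrt (2 * y / x' + 4 * (\<mu> + 2)^2 / x'^2)
        \<and> \<bar>ubound \<mu> x' y n / marcum_ratio \<mu> x' y - 1\<bar>
          \<le> sqrt (2 * y / x' + 4 * (\<mu> + 2)^2 / x'^2)) at_top"
    proof (rule eventually_mono[OF eventually_gt_at_top[of 0]])
      fix x' :: real assume "x' > 0"
      then have m: "mp \<mu> x' y" using assms by (intro mpI) auto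
      show "\<bar>lbound \<mu> x' y n / marcum_ratio \<mu> x' y - 1\<bar>
          \<le> sqrt (2 * y / x' + 4 * (\<mu> + 2)^2 / x'^2)
        \<and> \<bar>ubound \<mu> x' y n / marcum_ratio \<mu> x' y - 1\<bar>
          \<le> sqrt (2 * y / x' + 4 * (\<mu> + 2)^2 / x'^2)"
        using mp.sharp[OF m, of n] mp.rho0_le_x[OF m \<open>x' > 0\<close>] by linarith
    qed
    show ?thesis
      by (intro conjI lim1[OF _ lim_x]; rule eventually_mono[OF ev]) auto
  qed
  have P5: "((\<lambda>y'. lbound \<mu> x y' n / marcum_ratio \<mu> x y') \<longlongrightarrow> 1) (at_right 0)
          \<and> ((\<lambda>y'. ubound \<mu> x y' n / marcum_ratio \<mu> x y') \<longlongrightarrow> 1) (at_right 0)" for n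
  proof -
    have ev: "eventually (\<lambda>y'. \<bar>lbound \<mu> x y' n / marcum_ratio \<mu> x y' - 1\<bar> \<le> y' / (\<mu> + 1)
        \<and> \<bar>ubound \<mu> x y' n / marcum_ratio \<mu> x y' - 1\<bar> \<le> y' / (\<mu> + 1)) (at_right 0)"
    proof (rule eventually_mono[OF eventually_at_right_less])
      fix y' :: real assume "0 < y'"
      then have m: "mp \<mu> x y'" using assms by (intro mpI) auto
      show "\<bar>lbound \<mu> x y' n / marcum_ratio \<mu> x y' - 1\<bar> \<le> y' / (\<mu> + 1)
        \<and> \<bar>ubound \<mu> x y' n / marcum_ratio \<mu> x y' - 1\<bar> \<le> y' / (\<mu> + 1)"
        using mp.sharp[OF m, of n] mp.rho0_le_mu[OF m] by linarith
    qed
    show ?thesis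
      by (intro conjI lim1[OF _ lim_y[OF assms(1)]]; rule eventually_mono[OF ev]) auto
  qed
  have P6: "((\<lambda>m. lbound m x y n / marcum_ratio m x y) \<longlongrightarrow> 1) at_top
          \<and> ((\<lambda>m. ubound m x y n / marcum_ratio m x y) \<longlongrightarrow> 1) at_top" for n
  proof -
    have ev: "eventually (\<lambda>m. \<bar>lbound m x y n / marcum_ratio m x y - 1\<bar> \<le> y / (m + 1)
        \<and> \<bar>ubound m x y n / marcum_ratio m x y - 1\<bar> \<le> y / (m + 1)) at_top"
    proof (rule eventually_mono[OF eventually_gt_at_top[of 0]])
      fix m :: real assume "0 < m"
      then have mm: "mp m x y" using assms by (intro mpI) auto
      show "\<bar>lbound m x y n / marcum_ratio m x y - 1\<bar> \<le> y / (m + 1)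
        \<and> \<bar>ubound m x y n / marcum_ratio m x y - 1\<bar> \<le> y / (m + 1)"
        using mp.sharp[OF mm, of n] mp.rho0_le_mu[OF mm] by linarith
    qed
    show ?thesis
      by (intro conjI lim1[OF _ lim_mu]; rule eventually_mono[OF ev]) auto
  qed
  show ?thesis using P1 P2 P3 P4 P5 P6 by blast
qed

end
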